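(* Let $Q$ be a polynomial with complex coefficients. There exists a polynomial $P$ with complex coefficients such that $Q(x)=e^{V(x)}\frac{d}{dx}\big(e^{-V(x)}P(x)\big)$ if and only if $\int_{\Gamma_k}Q(z)e^{-V(z)}\,dz=0$ for all $k=1,\dots,D-1$. Moreover, such a $P$ (when it exists) is unique.
   Context: Let $V$ be a real polynomial of even degree $D\ge2$ with leading coefficient $\gamma>0$. Let $\omega=e^{2\pi i/D}$, $C_0=[0,+\infty)$ oriented away from $0$, and for $k=1,\dots,D-1$ let $C_k=\omega^k[0,+\infty)$ oriented towards $0$. Set $\Gamma_k=C_0\cup C_k$ ($k=1,\dots,D-1$) with these orientations, so that $\int_{\Gamma_k}f(z)\,dz=\int_0^\infty f(r)\,dr-\omega^k\int_0^\infty f(\omega^k r)\,dr$. *)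

theory Defs
  imports "HOL-Analysis.Analysis" "HOL-Computational_Algebra.Polynomial"
begin

definition omega :: "nat \<Rightarrow> complex" where
  "omega D = exp (2 * of_real pi * \<i> / of_nat D)"

text \<open>Integral over Gamma_k = C_0 \<union> C_k, C_0 = [0,\<infinity>) oriented away from 0,
  C_k = omega^k [0,\<infinity>) oriented towards 0:
  int_{Gamma_k} f = int_0^\<infinity> f(r) dr - omega^k int_0^\<infinity> f(omega^k r) dr.\<close>
definition Gamma_integral :: "nat \<Rightarrow> nat \<Rightarrow> (complex \<Rightarrow> complex) \<Rightarrow> complex" where
  "Gamma_integral D k f =
     integral {0..} (\<lambda>r::real. f (complex_of_real r))
     - omega D ^ k * integral {0..} (\<lambda>r::real. f (omega D ^ k * complex_of_real r))"

end

theory Submission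
  imports Defs "Jordan_Normal_Form.Determinant" "HOL-Real_Asymp.Real_Asymp"
begin


lemma lin_alg:
  fixes F :: "nat \<Rightarrow> nat \<Rightarrow> complex"
  assumes rows: "\<And>c. (\<forall>i<n. (\<Sum>k<n. c k * F k i) = 0) \<Longrightarrow> \<forall>k<n. c k = 0"
      and x: "\<forall>k<n. (\<Sum>i<n. F k i * x i) = 0"
  shows "\<forall>i<n. x i = 0"
proof (rule ccontr)
  assume nz: "\<not> (\<forall>i<n. x i = 0)"
  define M where "M = mat n n (\<lambda>(k,i). F k i)"
  have Mc: "M \<in> carrier_mat n n" unfolding M_def by simp
  define v where "v = vec n x"
  have vc: "v \<in> carrier_vec n" unfolding v_def by simp
  have v0: "v \<noteq> 0\<^sub>v n"
  proof
    assume "v = 0\<^sub>v n"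
    then have "vec_index v i = 0" if "i < n" for i using that by simp
    then show False using nz unfolding v_def by simp
  qed
  have "M *\<^sub>v v = 0\<^sub>v n"
  proof (rule eq_vecI)
    fix k assume k: "k < dim_vec (0\<^sub>v n :: complex vec)"
    then have k': "k < n" by simp
    have "vec_index (M *\<^sub>v v) k = (\<Sum>i\<in>{0..<n}. F k i * x i)"
      using k' unfolding M_def v_def by (simp add: scalar_prod_def)
    also have "\<dots> = 0" using x k' by (simp add: atLeast0LessThan)
    finally show "vec_index (M *\<^sub>v v) k = vec_index (0\<^sub>v n) k" using k' by simp
  qed (simp add: M_def)
  then have "Determinant.det M = 0"
    using det_0_iff_vec_prod_zero_field[OF Mc] vc v0 by blast
  then have "Determinant.det (transpose_mat M) = 0" using det_transpose[OF Mc] by simp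
  moreover have Mt: "transpose_mat M \<in> carrier_mat n n" using Mc by simp
  ultimately obtain u where u: "u \<in> carrier_vec n" "u \<noteq> 0\<^sub>v n" "transpose_mat M *\<^sub>v u = 0\<^sub>v n"
    using det_0_iff_vec_prod_zero_field[OF Mt] by blast
  define c where "c k = vec_index u k" for k
  have "\<forall>i<n. (\<Sum>k<n. c k * F k i) = 0"
  proof (intro allI impI)
    fix i assume i: "i < n"
    have "vec_index (transpose_mat M *\<^sub>v u) i = (\<Sum>k\<in>{0..<n}. F k i * vec_index u k)"
      using i u(1) unfolding M_def by (simp add: scalar_prod_def)
    then have "(\<Sum>k\<in>{0..<n}. F k i * vec_index u k) = 0" using u(3) i by simp
    then show "(\<Sum>k<n. c k * F k i) = 0" unfolding c_def by (simp add: atLeast0LessThan mult.commute)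
  qed
  from rows[OF this] have "\<forall>k<n. vec_index u k = 0" unfolding c_def .
  then have "u = 0\<^sub>v n" using u(1) by (intro eq_vecI) auto
  with u(2) show False by simp
qed



lemma kb:
  fixes n p :: nat and A g :: real
  assumes n: "n \<ge> 1" and g: "g > 0" and A: "A \<ge> 0"
  shows "\<exists>C. \<forall>r\<ge>0. (1+r)^p * exp (A*(1+r)^n - g*r^(n+1)) \<le> C * exp (-r)"
proof -
  define K where "K = A*2^n + real p + 1"
  define r0 where "r0 = max 1 (K/g)"
  have r01: "r0 \<ge> 1" unfolding r0_def by simp
  define C where "C = max 1 ((1+r0)^p * exp (A*(1+r0)^n) * exp r0)"
  have "(1+r)^p * exp (A*(1+r)^n - g*r^(n+1)) \<le> C * exp (-r)" if r: "r \<ge> 0" for r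
  proof (cases "r \<ge> r0")
    case True
    then have r1: "r \<ge> 1" and rK: "r \<ge> K/g" unfolding r0_def by auto
    have "(1+r)^p \<le> exp r ^ p"
      by (intro power_mono) (use r exp_ge_add_one_self in auto)
    also have "\<dots> = exp (real p * r)" by (simp add: exp_of_nat_mult[symmetric])
    finally have e1: "(1+r)^p \<le> exp (real p * r)" .
    have "(1+r)^n \<le> (2*r)^n" by (intro power_mono) (use r1 in auto)
    then have e2: "(1+r)^n \<le> 2^n * r^n" by (simp add: power_mult_distrib)
    have rn: "r \<le> r^n" using r1 n by (metis power_increasing power_one_right)
    have "K \<le> g * r" using rK g by (simp add: field_simps)
    then have "K * r^n \<le> g * r * r^n" using r by (intro mult_right_mono) auto
    then have e3: "K * r^n \<le> g * r^(n+1)" by (simp add: algebra_simps)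
    have "real p * r + (A*(1+r)^n - g*r^(n+1)) \<le> real p * r^n + A * 2^n * r^n - g*r^(n+1)"
    proof -
      have "A*(1+r)^n \<le> A*(2^n*r^n)" using e2 A by (intro mult_left_mono) auto
      moreover have "real p * r \<le> real p * r^n" using rn by (intro mult_left_mono) auto
      ultimately show ?thesis by (simp add: algebra_simps)
    qed
    also have "\<dots> \<le> -(r^n)" using e3 unfolding K_def by (simp add: algebra_simps)
    also have "\<dots> \<le> -r" using rn by simp
    finally have ex: "real p * r + (A*(1+r)^n - g*r^(n+1)) \<le> -r" .
    have "(1+r)^p * exp (A*(1+r)^n - g*r^(n+1)) \<le> exp (real p * r) * exp (A*(1+r)^n - g*r^(n+1))"
      by (intro mult_right_mono e1) auto
    also have "\<dots> = exp (real p * r + (A*(1+r)^n - g*r^(n+1)))" by (simp add: exp_add)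
    also have "\<dots> \<le> exp (-r)" using ex by simp
    also have "\<dots> \<le> C * exp (-r)" unfolding C_def by simp
    finally show ?thesis .
  next
    case False
    then have rr: "r \<le> r0" by simp
    have "(1+r)^p \<le> (1+r0)^p" by (intro power_mono) (use r rr in auto)
    moreover have "exp (A*(1+r)^n - g*r^(n+1)) \<le> exp (A*(1+r0)^n)"
    proof -
      have "(1+r)^n \<le> (1+r0)^n" by (intro power_mono) (use r rr in auto)
      then have "A*(1+r)^n \<le> A*(1+r0)^n" using A by (intro mult_left_mono) auto
      moreover have "g*r^(n+1) \<ge> 0" using g r by simp
      ultimately show ?thesis by simp
    qed
    ultimately have "(1+r)^p * exp (A*(1+r)^n - g*r^(n+1)) \<le> (1+r0)^p * exp (A*(1+r0)^n)"
      by (intro mult_mono) (use r r01 in auto)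
    also have "\<dots> = (1+r0)^p * exp (A*(1+r0)^n) * exp r0 * exp (-r0)"
      by (simp add: exp_minus field_simps)
    also have "\<dots> \<le> C * exp (-r)"
      unfolding C_def by (intro mult_mono) (use rr r in auto)
    finally show ?thesis .
  qed
  then show ?thesis by blast
qed

lemma integrable_bound_exp:
  fixes f :: "real \<Rightarrow> 'b::euclidean_space"
  assumes c: "continuous_on {0..} f" and b: "\<And>r. r \<ge> 0 \<Longrightarrow> norm (f r) \<le> K * exp (-r)"
  shows "f integrable_on {0..}"
proof (rule measurable_bounded_by_integrable_imp_integrable[where g = "\<lambda>r. K * exp (-r)"])
  show "f \<in> borel_measurable (lebesgue_on {0..})"
    by (rule continuous_imp_measurable_on_sets_lebesgue[OF c]) auto
  show "(\<lambda>r. K * exp (- r)) integrable_on {0..}"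
    using integrable_on_cmult_left[OF integrable_on_exp_minus_to_infinity[of 1 0], of K] by simp
qed (use b in auto)

lemma poly_norm_bound:
  fixes p :: "complex poly"
  shows "norm (poly p z) \<le> (\<Sum>i\<le>degree p. norm (coeff p i)) * (1 + norm z)^degree p"
proof -
  have "norm (poly p z) \<le> (\<Sum>i\<le>degree p. norm (coeff p i * z^i))"
    unfolding poly_altdef by (rule norm_sum)
  also have "\<dots> \<le> (\<Sum>i\<le>degree p. norm (coeff p i) * (1 + norm z)^degree p)"
  proof (intro sum_mono)
    fix i assume i: "i \<in> {..degree p}"
    have "norm z ^ i \<le> (1 + norm z)^i" by (intro power_mono) auto
    also have "\<dots> \<le> (1 + norm z)^degree p" using i by (intro power_increasing) auto
    finally show "norm (coeff p i * z^i) \<le> norm (coeff p i) * (1 + norm z)^degree p"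
      by (simp add: norm_mult norm_power mult_left_mono)
  qed
  also have "\<dots> = (\<Sum>i\<le>degree p. norm (coeff p i)) * (1 + norm z)^degree p"
    by (simp add: sum_distrib_right)
  finally show ?thesis .
qed

locale VS =
  fixes V :: "real poly"
  assumes degV: "degree V \<ge> 2" and lcV: "lead_coeff V > 0"
begin

abbreviation "D \<equiv> degree V"
definition Vc where "Vc = map_poly complex_of_real V"
definition gam where "gam = lead_coeff V"
definition w where "w = omega (degree V)"
definition E where "E = Vc - monom (complex_of_real gam) D"
definition NE where "NE = (\<Sum>i\<le>degree E. norm (coeff E i))"

lemma gam_pos: "gam > 0" using lcV unfolding gam_def by simp
lemma D_pos: "D > 0" using degV by simp

lemma coeff_Vc: "coeff Vc i = complex_of_real (coeff V i)"
  unfolding Vc_def by (simp add: coeff_map_poly)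

lemma degree_Vc: "degree Vc = D"
  unfolding Vc_def by (rule degree_map_poly) simp

lemma w_pow_D: "w ^ D = 1"
proof -
  have "w ^ D = exp (of_nat D * (2 * of_real pi * \<i> / of_nat D))"
    unfolding w_def omega_def by (rule exp_of_nat_mult[symmetric])
  also have "\<dots> = exp (2 * of_real pi * \<i>)" using D_pos by simp
  also have "\<dots> = 1" by simp
  finally show ?thesis .
qed

lemma norm_w: "norm w = 1"
  unfolding w_def omega_def by (simp add: norm_exp_eq_Re)

lemma norm_wj: "norm (w ^ j) = 1"
  by (simp add: norm_power norm_w)

lemma ray_pow_D: "(w ^ j * complex_of_real r) ^ D = complex_of_real (r ^ D)"
proof -
  have "(w ^ j * complex_of_real r) ^ D = (w ^ D) ^ j * complex_of_real r ^ D"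
    by (simp add: power_mult_distrib power_mult[symmetric] mult.commute)
  then show ?thesis by (simp add: w_pow_D)
qed

lemma degree_E: "degree E \<le> D - 1"
proof (rule degree_le, intro allI impI)
  fix i assume i: "D - 1 < i"
  show "coeff E i = 0"
  proof (cases "i = D")
    case True then show ?thesis unfolding E_def by (simp add: coeff_Vc gam_def)
  next
    case False
    then have "i > D" using i by simp
    then have "coeff V i = 0" by (simp add: coeff_eq_0)
    then show ?thesis using False unfolding E_def by (simp add: coeff_Vc)
  qed
qed

lemma poly_Vc: "poly Vc z = complex_of_real gam * z ^ D + poly E z"
  unfolding E_def by (simp add: poly_monom)

lemma NE_nonneg: "NE \<ge> 0" unfolding NE_def by (simp add: sum_nonneg)

lemma norm_E_ray:
  assumes r: "r \<ge> 0"
  shows "norm (poly E (w ^ j * complex_of_real r)) \<le> NE * (1 + r)^(D-1)"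
proof -
  have "norm (poly E (w ^ j * complex_of_real r)) \<le> NE * (1 + r)^degree E"
    using poly_norm_bound[of E "w ^ j * complex_of_real r"] r
    unfolding NE_def by (simp add: norm_mult norm_wj)
  also have "\<dots> \<le> NE * (1 + r)^(D-1)"
    using r degree_E NE_nonneg by (intro mult_left_mono power_increasing) auto
  finally show ?thesis .
qed

lemma norm_expV_ray:
  assumes r: "r \<ge> 0"
  shows "norm (exp (- poly Vc (w ^ j * complex_of_real r))) \<le> exp (NE * (1 + r)^(D-1) - gam * r^D)"
proof -
  have "Re (- poly Vc (w ^ j * complex_of_real r)) = - gam * r^D - Re (poly E (w ^ j * complex_of_real r))"
    unfolding poly_Vc ray_pow_D by simp
  also have "\<dots> \<le> NE * (1 + r)^(D-1) - gam * r^D"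
    using norm_E_ray[OF r, of j] abs_Re_le_cmod[of "poly E (w ^ j * complex_of_real r)"] by linarith
  finally show ?thesis by (simp add: norm_exp_eq_Re)
qed

lemma kbD: "\<exists>C. \<forall>r\<ge>0. (1+r)^p * exp (A*(1+r)^(D-1) - gam*r^D) \<le> C * exp (-r)" if "A \<ge> 0" for A p
proof -
  have "D - 1 \<ge> 1" "D - 1 + 1 = D" using degV by auto
  with kb[OF this(1) gam_pos that, of p] show ?thesis by simp
qed

lemma ray_bound: "\<exists>K. \<forall>j r. r \<ge> 0 \<longrightarrow>
   norm (poly Q (w ^ j * complex_of_real r) * exp (- poly Vc (w ^ j * complex_of_real r))) \<le> K * exp (-r)"
proof -
  define NQ where "NQ = (\<Sum>i\<le>degree Q. norm (coeff Q i))"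
  have NQ: "NQ \<ge> 0" unfolding NQ_def by (simp add: sum_nonneg)
  obtain C where C: "\<And>r. r \<ge> 0 \<Longrightarrow> (1+r)^degree Q * exp (NE*(1+r)^(D-1) - gam*r^D) \<le> C * exp (-r)"
    using kbD[OF NE_nonneg, of "degree Q"] by blast
  have "norm (poly Q (w ^ j * complex_of_real r) * exp (- poly Vc (w ^ j * complex_of_real r))) \<le> (NQ * C) * exp (-r)"
    if r: "r \<ge> 0" for j r
  proof -
    have "norm (poly Q (w ^ j * complex_of_real r)) \<le> NQ * (1+r)^degree Q"
      using poly_norm_bound[of Q "w ^ j * complex_of_real r"] r
      unfolding NQ_def by (simp add: norm_mult norm_wj)
    then have "norm (poly Q (w ^ j * complex_of_real r) * exp (- poly Vc (w ^ j * complex_of_real r)))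
       \<le> (NQ * (1+r)^degree Q) * exp (NE * (1 + r)^(D-1) - gam * r^D)"
      unfolding norm_mult by (intro mult_mono norm_expV_ray r) (use r NQ in auto)
    also have "\<dots> = NQ * ((1+r)^degree Q * exp (NE * (1 + r)^(D-1) - gam * r^D))" by simp
    also have "\<dots> \<le> NQ * (C * exp (-r))" using C[OF r] NQ by (intro mult_left_mono) auto
    finally show ?thesis by simp
  qed
  then show ?thesis by blast
qed

lemma ray_cont: "continuous_on S (\<lambda>r::real. poly Q (w ^ j * complex_of_real r) * exp (- poly Vc (w ^ j * complex_of_real r)))"
  by (intro continuous_intros)

lemma ray_integrable: "(\<lambda>r::real. poly Q (w ^ j * complex_of_real r) * exp (- poly Vc (w ^ j * complex_of_real r))) integrable_on {0..}"
proof -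
  obtain K where K: "\<forall>j r. r \<ge> 0 \<longrightarrow>
   norm (poly Q (w ^ j * complex_of_real r) * exp (- poly Vc (w ^ j * complex_of_real r))) \<le> K * exp (-r)"
    using ray_bound by blast
  show ?thesis by (rule integrable_bound_exp[OF ray_cont]) (use K in auto)
qed

definition T where "T P = pderiv P - pderiv Vc * P"

lemma G_deriv: "((\<lambda>z. poly P z * exp (- poly Vc z)) has_field_derivative (poly (T P) z * exp (- poly Vc z))) (at z)"
proof -
  have "((\<lambda>z. poly P z * exp (- poly Vc z)) has_field_derivative (poly (pderiv P) z * exp (- poly Vc z) + poly P z * (exp (- poly Vc z) * (- poly (pderiv Vc) z)))) (at z)"
    by (auto intro!: derivative_eq_intros poly_DERIV)
  then show ?thesis unfolding T_def by (simp add: algebra_simps)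
qed

lemma ftc: "w ^ j * integral {0..} (\<lambda>r::real. poly (T P) (w ^ j * complex_of_real r) * exp (- poly Vc (w ^ j * complex_of_real r)))
   = - (poly P 0 * exp (- poly Vc 0))"
proof -
  define G where "G z = poly P z * exp (- poly Vc z)" for z
  define h where "h r = G (w ^ j * complex_of_real r)" for r
  define h' where "h' r = w ^ j * (poly (T P) (w ^ j * complex_of_real r) * exp (- poly Vc (w ^ j * complex_of_real r)))" for r
  have hd: "(h has_vector_derivative h' r) (at r within S)" for r S
  proof -
    have 1: "((\<lambda>r::real. w ^ j * complex_of_real r) has_vector_derivative w ^ j) (at r within S)"
      by (auto intro!: derivative_eq_intros simp: has_vector_derivative_def fun_eq_iff scaleR_conv_of_real)
    have 2: "(G has_field_derivative (poly (T P) (w ^ j * complex_of_real r) * exp (- poly Vc (w ^ j * complex_of_real r))))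
        (at (w ^ j * complex_of_real r) within (\<lambda>r::real. w ^ j * complex_of_real r) ` S)"
      unfolding G_def by (rule has_field_derivative_at_within[OF G_deriv])
    show ?thesis using field_vector_diff_chain_within[OF 1 2] unfolding h_def h'_def o_def .
  qed
  obtain K where K: "\<forall>j r. r \<ge> 0 \<longrightarrow>
   norm (poly (T P) (w ^ j * complex_of_real r) * exp (- poly Vc (w ^ j * complex_of_real r))) \<le> K * exp (-r)"
    using ray_bound by blast
  obtain K2 where K2: "\<forall>j r. r \<ge> 0 \<longrightarrow>
   norm (poly P (w ^ j * complex_of_real r) * exp (- poly Vc (w ^ j * complex_of_real r))) \<le> K2 * exp (-r)"
    using ray_bound by blast
  have "(h' has_integral (- h 0)) {0..}"
  proof (rule has_integral_dominated_convergence[where f = "\<lambda>k x. if x \<in> {0..real k} then h' x else 0"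
        and y = "\<lambda>k. h (real k) - h 0" and h = "\<lambda>r. K * exp (-r)"])
    fix k :: nat
    have "(h' has_integral (h (real k) - h 0)) {0..real k}"
      by (rule fundamental_theorem_of_calculus) (auto intro: hd)
    then show "((\<lambda>x. if x \<in> {0..real k} then h' x else 0) has_integral (h (real k) - h 0)) {0..}"
      by (subst has_integral_restrict) auto
  next
    show "(\<lambda>r. K * exp (- r)) integrable_on {0..}"
      using integrable_on_cmult_left[OF integrable_on_exp_minus_to_infinity[of 1 0], of K] by simp
  next
    fix k :: nat
    show "\<forall>x\<in>{0..}. norm (if x \<in> {0..real k} then h' x else 0) \<le> K * exp (- x)"
    proof
      fix x :: real assume x: "x \<in> {0..}"
      have "K * exp (-x) \<ge> 0" using K[rule_format, of x j] x by (auto intro: order_trans[OF norm_ge_zero])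
      then show "norm (if x \<in> {0..real k} then h' x else 0) \<le> K * exp (- x)"
        using K[rule_format, of x j] x unfolding h'_def by (auto simp: norm_mult norm_wj)
    qed
  next
    show "\<forall>x\<in>{0..}. (\<lambda>k. if x \<in> {0..real k} then h' x else 0) \<longlonglongrightarrow> h' x"
    proof
      fix x :: real assume x: "x \<in> {0..}"
      have "eventually (\<lambda>k. real k \<ge> x) sequentially"
        by (meson eventually_sequentiallyI nat_ceiling_le_eq)
      then have "eventually (\<lambda>k. (if x \<in> {0..real k} then h' x else 0) = h' x) sequentially"
        by eventually_elim (use x in auto)
      then show "(\<lambda>k. if x \<in> {0..real k} then h' x else 0) \<longlonglongrightarrow> h' x"
        by (rule tendsto_eventually)
    qed
  next
    have "(\<lambda>k. h (real k)) \<longlonglongrightarrow> 0"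
    proof (rule Lim_null_comparison)
      show "\<forall>\<^sub>F k in sequentially. norm (h (real k)) \<le> K2 * exp (- real k)"
      proof (intro always_eventually allI)
        fix k :: nat
        show "norm (h (real k)) \<le> K2 * exp (- real k)"
          using K2[rule_format, of "real k" j] unfolding h_def G_def by simp
      qed
      show "(\<lambda>k::nat. K2 * exp (- real k)) \<longlonglongrightarrow> 0" by real_asymp
    qed
    then show "(\<lambda>k. h (real k) - h 0) \<longlonglongrightarrow> - h 0"
      using tendsto_diff[of _ 0 _ "\<lambda>_. h 0" "h 0"] by simp
  qed
  then have "integral {0..} h' = - h 0" by (rule integral_unique)
  then show ?thesis unfolding h'_def h_def G_def by (simp add: integral_mult_right)
qed

definition I where "I j Q = integral {0..} (\<lambda>r::real. poly Q (w ^ j * complex_of_real r) * exp (- poly Vc (w ^ j * complex_of_real r)))"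
definition L where "L k Q = Gamma_integral D k (\<lambda>z. poly Q z * exp (- poly Vc z))"

lemma L_eq: "L k Q = I 0 Q - w ^ k * I k Q"
  unfolding L_def I_def Gamma_integral_def w_def by simp

lemma L_T: "L k (T P) = 0"
  unfolding L_eq using ftc[of 0 P] ftc[of k P] unfolding I_def by simp

lemma I_add: "I j (p + q) = I j p + I j q"
  unfolding I_def by (simp add: distrib_right integral_add ray_integrable)

lemma L_add: "L k (p + q) = L k p + L k q"
  unfolding L_eq I_add by (simp add: algebra_simps)

lemma I_expand:
  assumes "degree R < n"
  shows "I j R = (\<Sum>i<n. coeff R i * I j (monom 1 i))"
proof -
  have n: "n \<ge> 1" using assms by simp
  have "R = (\<Sum>i\<le>n-1. monom (coeff R i) i)"
    using assms by (intro poly_as_sum_of_monoms'[symmetric]) simp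
  also have "{..n-1} = {..<n}" using n by auto
  finally have pR: "poly R z = (\<Sum>i<n. coeff R i * z ^ i)" for z
    by (metis (no_types, lifting) poly_monom poly_sum sum.cong)
  have "I j R = integral {0..} (\<lambda>r::real. \<Sum>i<n. coeff R i * (poly (monom 1 i) (w ^ j * complex_of_real r) * exp (- poly Vc (w ^ j * complex_of_real r))))"
    unfolding I_def pR by (simp add: sum_distrib_right poly_monom mult.assoc)
  also have "\<dots> = (\<Sum>i<n. integral {0..} (\<lambda>r::real. coeff R i * (poly (monom 1 i) (w ^ j * complex_of_real r) * exp (- poly Vc (w ^ j * complex_of_real r)))))"
    by (intro integral_sum) (auto intro!: integrable_on_mult_right ray_integrable)
  also have "\<dots> = (\<Sum>i<n. coeff R i * I j (monom 1 i))"
    unfolding I_def by (simp add: integral_mult_right)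
  finally show ?thesis .
qed

lemma L_expand:
  assumes "degree R < n"
  shows "L k R = (\<Sum>i<n. coeff R i * L k (monom 1 i))"
  unfolding L_eq I_expand[OF assms] by (simp add: algebra_simps sum_subtractf sum_distrib_left)

lemma T_add: "T (p + q) = T p + T q" unfolding T_def by (simp add: pderiv_add algebra_simps)
lemma T_diff: "T (p - q) = T p - T q" unfolding T_def by (simp add: pderiv_diff algebra_simps)
lemma T_0: "T 0 = 0" unfolding T_def by simp

lemma pderiv_Vc: "degree (pderiv Vc) = D - 1" "coeff (pderiv Vc) (D - 1) = of_nat D * complex_of_real gam"
proof -
  show "degree (pderiv Vc) = D - 1" by (simp add: degree_pderiv degree_Vc)
  have "Suc (D - 1) = D" using D_pos by simp
  then show "coeff (pderiv Vc) (D - 1) = of_nat D * complex_of_real gam"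
    by (simp add: coeff_pderiv coeff_Vc gam_def)
qed

lemma T_lead:
  assumes P: "P \<noteq> 0"
  shows "degree (T P) = degree P + (D - 1)" "coeff (T P) (degree P + (D - 1)) = - (of_nat D * complex_of_real gam) * lead_coeff P"
proof -
  define m where "m = degree P + (D - 1)"
  have D1: "D - 1 \<ge> 1" using degV by simp
  have pV0: "pderiv Vc \<noteq> 0"
  proof
    assume "pderiv Vc = 0"
    then have "coeff (pderiv Vc) (D - 1) = 0" by simp
    then show False using pderiv_Vc(2) gam_pos D_pos by simp
  qed
  have dm: "degree (pderiv Vc * P) = m" unfolding m_def
    using degree_mult_eq[OF pV0 P] pderiv_Vc(1) by simp
  have c1: "coeff (pderiv P) m = 0"
    by (rule coeff_eq_0) (use D1 in \<open>simp add: m_def degree_pderiv\<close>)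
  have c2: "coeff (pderiv Vc * P) m = of_nat D * complex_of_real gam * lead_coeff P"
    using lead_coeff_mult[of "pderiv Vc" P] dm pderiv_Vc by (simp add: m_def)
  have cm: "coeff (T P) m = - (of_nat D * complex_of_real gam) * lead_coeff P"
    unfolding T_def using c1 c2 by simp
  have "degree (T P) \<le> m"
  proof -
    have "degree (pderiv P) \<le> m" unfolding m_def by (simp add: degree_pderiv)
    then show ?thesis unfolding T_def using dm by (metis degree_diff_le order_refl)
  qed
  moreover have "m \<le> degree (T P)"
    by (rule le_degree) (use cm gam_pos D_pos P in simp)
  ultimately show "degree (T P) = degree P + (D - 1)" unfolding m_def by simp
  show "coeff (T P) (degree P + (D - 1)) = - (of_nat D * complex_of_real gam) * lead_coeff P"
    using cm unfolding m_def .
qed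

lemma T_inj: "T P1 = T P2 \<Longrightarrow> P1 = P2"
proof (rule ccontr)
  assume eq: "T P1 = T P2" and ne: "P1 \<noteq> P2"
  define d where "d = P1 - P2"
  have d0: "d \<noteq> 0" using ne unfolding d_def by simp
  then have lc: "lead_coeff d \<noteq> 0" by simp
  have "coeff (T d) (degree d + (D - 1)) \<noteq> 0"
    unfolding T_lead(2)[OF d0] using lc gam_pos D_pos by simp
  moreover have "T d = 0" using eq unfolding d_def by (simp add: T_diff)
  ultimately show False by simp
qed

lemma T_divide: "\<exists>P R. Q = T P + R \<and> degree R < D - 1"
proof (induction "degree Q" arbitrary: Q rule: less_induct)
  case less
  show ?case
  proof (cases "degree Q < D - 1")
    case True
    then show ?thesis by (intro exI[of _ 0] exI[of _ Q]) (simp add: T_0)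
  next
    case False
    then have Q0: "Q \<noteq> 0" using degV by (metis degree_0 diff_is_0_eq' le_trans not_le not_one_le_zero one_le_numeral numeral_le_iff semiring_norm(68) Suc_1 Suc_diff_le diff_Suc_1 le_Suc_eq zero_less_diff)
    define n where "n = degree Q - (D - 1)"
    define c where "c = - lead_coeff Q / (of_nat D * complex_of_real gam)"
    have c0: "c \<noteq> 0" unfolding c_def using Q0 gam_pos D_pos by simp
    define P1 where "P1 = monom c n"
    have P10: "P1 \<noteq> 0" unfolding P1_def using c0 by simp
    have dP1: "degree P1 = n" unfolding P1_def using c0 by (simp add: degree_monom_eq)
    have dT: "degree (T P1) = degree Q" using T_lead(1)[OF P10] dP1 False unfolding n_def by simp
    have cT: "coeff (T P1) (degree Q) = lead_coeff Q"
      using T_lead(2)[OF P10] dP1 False gam_pos D_pos unfolding n_def c_def P1_def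
      by (simp add: degree_monom_eq c0[unfolded c_def])
    define Q' where "Q' = Q - T P1"
    show ?thesis
    proof (cases "Q' = 0")
      case True
      then show ?thesis using degV by (intro exI[of _ P1] exI[of _ 0]) (simp add: Q'_def)
    next
      case Q'0: False
      have "degree Q' \<le> degree Q" unfolding Q'_def using dT by (metis degree_diff_le order_refl)
      moreover have "coeff Q' (degree Q) = 0" unfolding Q'_def using cT by simp
      ultimately have "degree Q' < degree Q"
        using Q'0 by (metis le_neq_implies_less leading_coeff_0_iff)
      from less[OF this] obtain P R where "Q' = T P + R" "degree R < D - 1" by blast
      then show ?thesis by (intro exI[of _ "P + P1"] exI[of _ R]) (simp add: Q'_def T_add algebra_simps)
    qed
  qed
qed

lemma cond_iff: "(\<forall>x. poly Q x = exp (poly Vc x) * deriv (\<lambda>z. exp (- poly Vc z) * poly P z) x) \<longleftrightarrow> Q = T P"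
proof -
  have "deriv (\<lambda>z. exp (- poly Vc z) * poly P z) x = poly (T P) x * exp (- poly Vc x)" for x
    using G_deriv[of P x] by (simp add: mult.commute DERIV_imp_deriv)
  then have "exp (poly Vc x) * deriv (\<lambda>z. exp (- poly Vc z) * poly P z) x = poly (T P) x" for x
    by (simp add: exp_minus field_simps)
  then have "(\<forall>x. poly Q x = exp (poly Vc x) * deriv (\<lambda>z. exp (- poly Vc z) * poly P z) x) \<longleftrightarrow> poly Q = poly (T P)"
    by (auto simp: fun_eq_iff)
  then show ?thesis by (simp add: poly_eq_poly_eq_iff)
qed

end


context VS begin


lemma exp_partial_bound:
  fixes x :: complex
  shows "norm (\<Sum>n<N. x ^ n /\<^sub>R fact n) \<le> exp (norm x)"
proof -
  have "norm (\<Sum>n<N. x ^ n /\<^sub>R fact n) \<le> (\<Sum>n<N. norm x ^ n /\<^sub>R fact n)"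
    by (rule order_trans[OF norm_sum]) (simp add: norm_power)
  also have "\<dots> \<le> (\<Sum>n. norm x ^ n /\<^sub>R fact n)"
    by (rule sum_le_suminf) (use exp_converges[of "norm x"] in \<open>auto simp: sums_iff\<close>)
  also have "\<dots> = exp (norm x)" using exp_converges[of "norm x"] by (simp add: sums_iff)
  finally show ?thesis .
qed



definition J where "J j f = w ^ j * integral {0..} (\<lambda>r::real. f (w ^ j * complex_of_real r))"

lemma wpow_eq_1: "w ^ k = 1 \<longleftrightarrow> D dvd k"
proof
  assume h: "w ^ k = 1"
  have "w ^ k = exp (of_nat k * (2 * of_real pi * \<i> / of_nat D))"
    unfolding w_def omega_def by (rule exp_of_nat_mult[symmetric])
  with h have e: "exp (of_nat k * (2 * of_real pi * \<i> / of_nat D)) = 1" by simp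
  from e[unfolded exp_eq_1] obtain n :: int where
    n: "Im (of_nat k * (2 * of_real pi * \<i> / of_nat D)) = real_of_int (2 * n) * pi" by blast
  have "Im (of_nat k * (2 * of_real pi * \<i> / of_nat D)) = 2 * pi * real k / real D" by simp
  with n have "2 * pi * real k / real D = 2 * pi * real_of_int n" by (simp add: mult_ac)
  then have "real k = real D * real_of_int n" using D_pos by (simp add: field_simps)
  then have "real_of_int (int k) = real_of_int (int D * n)" by simp
  then have "int k = int D * n" by (simp only: of_int_eq_iff)
  then have "int D dvd int k" unfolding dvd_def by blast
  then show "D dvd k" by simp
next
  assume "D dvd k"
  then obtain m where "k = D * m" by blast
  then show "w ^ k = 1" by (simp add: power_mult w_pow_D)
qed

lemma geom_w: "(\<Sum>q<D. (w ^ k) ^ q) = (if D dvd k then of_nat D else 0)"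
proof (cases "D dvd k")
  case True
  then have "w ^ k = 1" using wpow_eq_1 by simp
  then show ?thesis using True by simp
next
  case False
  then have ne: "w ^ k \<noteq> 1" using wpow_eq_1 by simp
  have "(w ^ k) ^ D = (w ^ D) ^ k" by (metis power_mult mult.commute)
  then have "(w ^ k) ^ D = 1" by (simp add: w_pow_D)
  then show ?thesis using geometric_sum[OF ne, of D] False by simp
qed

lemma dft:
  fixes a :: "nat \<Rightarrow> complex"
  assumes h: "\<And>p. (\<Sum>j<D. a j * w ^ (j * (p + 1))) = 0"
  assumes l: "l < D"
  shows "a l = 0"
proof -
  have "0 = (\<Sum>q<D. w ^ ((D - l) * (q + 1)) * (\<Sum>j<D. a j * w ^ (j * (q + 1))))"
    using h by simp
  also have "\<dots> = (\<Sum>j<D. a j * (\<Sum>q<D. w ^ ((D - l) * (q + 1)) * w ^ (j * (q + 1))))"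
    unfolding sum_distrib_left by (subst sum.swap) (auto intro!: sum.cong simp: mult_ac)
  also have "\<dots> = (\<Sum>j<D. a j * (w ^ (j + (D - l)) * (\<Sum>q<D. (w ^ (j + (D - l))) ^ q)))"
  proof (intro sum.cong refl arg_cong[where f = "\<lambda>x. a _ * x"])
    fix j
    show "(\<Sum>q<D. w ^ ((D - l) * (q + 1)) * w ^ (j * (q + 1))) = w ^ (j + (D - l)) * (\<Sum>q<D. (w ^ (j + (D - l))) ^ q)"
      unfolding sum_distrib_left
    proof (intro sum.cong refl)
      fix q
      have ex: "m * (q+1) + j*(q+1) = (j+m) + (j+m)*q" for m :: nat by (simp add: algebra_simps)
      show "w ^ ((D - l) * (q + 1)) * w ^ (j * (q + 1)) = w ^ (j + (D - l)) * (w ^ (j + (D - l))) ^ q"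
        unfolding power_add[symmetric] power_mult[symmetric] ex ..
    qed
  qed
  also have "\<dots> = (\<Sum>j<D. if j = l then a l * of_nat D else 0)"
  proof (intro sum.cong refl)
    fix j assume j: "j \<in> {..<D}"
    show "a j * (w ^ (j + (D - l)) * (\<Sum>q<D. (w ^ (j + (D - l))) ^ q)) = (if j = l then a l * of_nat D else 0)"
    proof (cases "j = l")
      case True
      then have "j + (D - l) = D" using l by simp
      then show ?thesis using True by (simp add: geom_w w_pow_D)
    next
      case False
      have "\<not> D dvd (j + (D - l))"
      proof
        assume "D dvd (j + (D - l))"
        then obtain t where t: "j + (D - l) = D * t" by blast
        have m: "j + (D - l) > 0" "j + (D - l) < 2 * D" "j + (D - l) \<noteq> D" using j l False by auto
        have "t \<noteq> 0" using t m(1) by auto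
        moreover have "t \<noteq> 1" using t m(3) by auto
        moreover have "t < 2"
        proof (rule ccontr)
          assume "\<not> t < 2"
          then have "D * 2 \<le> D * t" by simp
          then show False using t m(2) by simp
        qed
        ultimately show False by linarith
      qed
      then show ?thesis using False by (simp add: geom_w)
    qed
  qed
  also have "\<dots> = a l * of_nat D" using l by simp
  finally show ?thesis using D_pos by simp
qed


lemma J_ray: "J j (\<lambda>z. poly Q z * exp (- poly Vc z)) = w ^ j * I j Q" unfolding J_def I_def by simp

definition cp where "cp p = integral {0..} (\<lambda>r::real. complex_of_real (r ^ p * exp (- gam * r ^ D)))"

lemma cp_nonzero: "cp p \<noteq> 0"
proof -
  define f where "f r = r ^ p * exp (- gam * r ^ D)" for r :: real
  have fc: "continuous_on S f" for S unfolding f_def by (intro continuous_intros)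
  obtain C where C: "\<forall>r\<ge>0. (1+r)^p * exp (0*(1+r)^(D-1) - gam*r^D) \<le> C * exp (-r)"
    using kbD[of 0 p] by auto
  have fb: "norm (f r) \<le> C * exp (-r)" if r: "r \<ge> 0" for r
  proof -
    have "norm (f r) = r^p * exp (- gam * r^D)" using r unfolding f_def by simp
    also have "\<dots> \<le> (1+r)^p * exp (0*(1+r)^(D-1) - gam*r^D)"
    proof -
      have "r^p \<le> (1+r)^p" by (intro power_mono) (use r in auto)
      then show ?thesis by (simp add: mult_right_mono)
    qed
    also have "\<dots> \<le> C * exp (-r)" using C r by blast
    finally show ?thesis .
  qed
  have fi: "f integrable_on {0..}" by (rule integrable_bound_exp[OF fc fb])
  have "(f has_integral integral {0..} f) {0..}" using fi by (rule integrable_integral)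
  from has_integral_linear[OF this bounded_linear_of_real]
  have "((\<lambda>r. complex_of_real (f r)) has_integral complex_of_real (integral {0..} f)) {0..}"
    by (simp add: o_def)
  then have cpe: "cp p = complex_of_real (integral {0..} f)"
    unfolding cp_def f_def by (rule integral_unique)
  have fi12: "f integrable_on {1..2}" by (rule integrable_continuous_interval[OF fc])
  have "integral {1..2::real} (\<lambda>_. exp (- gam * 2 ^ D)) \<le> integral {1..2} f"
  proof (rule integral_le)
    show "f integrable_on {1..2}" by (rule fi12)
    fix x :: real assume x: "x \<in> {1..2}"
    have "1 \<le> x ^ p" using x by simp
    moreover have "x ^ D \<le> 2 ^ D" using x by (intro power_mono) auto
    then have "exp (- gam * 2 ^ D) \<le> exp (- gam * x ^ D)" using gam_pos by simp
    ultimately have "1 * exp (- gam * 2 ^ D) \<le> x ^ p * exp (- gam * x ^ D)"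
      by (intro mult_mono) (use x in auto)
    then show "exp (- gam * 2 ^ D) \<le> f x" unfolding f_def by simp
  qed (auto intro: integrable_continuous_interval continuous_intros)
  also have "\<dots> \<le> integral {0..} f"
    by (rule integral_subset_le) (auto simp: fi12 fi f_def)
  finally have "integral {1..2::real} (\<lambda>_. exp (- gam * 2 ^ D)) \<le> integral {0..} f" .
  moreover have "integral {1..2::real} (\<lambda>_. exp (- gam * 2 ^ D)) = exp (- gam * 2 ^ D)"
    by simp
  ultimately have "integral {0..} f > 0" by (smt (verit) exp_gt_zero)
  then show ?thesis using cpe by simp
qed

lemma J_mono: "J j (\<lambda>z. z ^ p * exp (- complex_of_real gam * z ^ D)) = w ^ (j * (p + 1)) * cp p"
proof -
  have e: "(w ^ j * complex_of_real r) ^ p * exp (- complex_of_real gam * (w ^ j * complex_of_real r) ^ D)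
        = w ^ (j * p) * complex_of_real (r ^ p * exp (- gam * r ^ D))" for r
    unfolding ray_pow_D by (simp add: power_mult_distrib power_mult exp_of_real[symmetric])
  have "J j (\<lambda>z. z ^ p * exp (- complex_of_real gam * z ^ D)) = w ^ j * (w ^ (j * p) * cp p)"
    unfolding J_def e cp_def by (simp add: integral_mult_right)
  also have "\<dots> = w ^ (j * (p + 1)) * cp p" by (simp add: power_add)
  finally show ?thesis .
qed

definition QN where "QN p N = monom 1 p * (\<Sum>n<N. Polynomial.smult (complex_of_real (inverse (fact n))) (E ^ n))"

lemma poly_QN: "poly (QN p N) z = z ^ p * (\<Sum>n<N. poly E z ^ n /\<^sub>R fact n)"
  unfolding QN_def by (simp add: poly_monom poly_sum scaleR_conv_of_real mult.commute)

lemma limit_step: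
  "(\<lambda>N. J j (\<lambda>z. poly (QN p N) z * exp (- poly Vc z))) \<longlonglongrightarrow> J j (\<lambda>z. z ^ p * exp (- complex_of_real gam * z ^ D))"
proof -
  obtain C where C: "\<forall>r\<ge>0. (1+r)^p * exp ((2*NE)*(1+r)^(D-1) - gam*r^D) \<le> C * exp (-r)"
    using kbD[of "2*NE" p] NE_nonneg by auto
  define z where "z r = w ^ j * complex_of_real r" for r :: real
  have nz: "norm (z r) = r" if "r \<ge> 0" for r using that unfolding z_def by (simp add: norm_mult norm_wj)
  have "(\<lambda>N. integral {0..} (\<lambda>r. poly (QN p N) (z r) * exp (- poly Vc (z r))))
      \<longlonglongrightarrow> integral {0..} (\<lambda>r. z r ^ p * exp (- complex_of_real gam * z r ^ D))"
  proof (rule dominated_convergence(2)[where h = "\<lambda>r. C * exp (-r)"])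
    fix N show "(\<lambda>r. poly (QN p N) (z r) * exp (- poly Vc (z r))) integrable_on {0..}"
      unfolding z_def by (rule ray_integrable)
  next
    show "(\<lambda>r. C * exp (- r)) integrable_on {0..}"
      using integrable_on_cmult_left[OF integrable_on_exp_minus_to_infinity[of 1 0], of C] by simp
  next
    fix N and r :: real assume r: "r \<in> {0..}"
    then have r0: "r \<ge> 0" by simp
    have s: "norm (\<Sum>n<N. poly E (z r) ^ n /\<^sub>R fact n) \<le> exp (NE * (1 + r)^(D-1))"
      using exp_partial_bound[where N=N and x="poly E (z r)"] norm_E_ray[OF r0, of j] unfolding z_def
      by (meson exp_le_cancel_iff order_trans)
    have "norm (poly (QN p N) (z r) * exp (- poly Vc (z r)))
       = r ^ p * norm (\<Sum>n<N. poly E (z r) ^ n /\<^sub>R fact n) * norm (exp (- poly Vc (z r)))"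
      unfolding poly_QN by (simp add: norm_mult norm_power nz[OF r0])
    also have "\<dots> \<le> (1+r)^p * exp (NE * (1 + r)^(D-1)) * exp (NE * (1 + r)^(D-1) - gam * r^D)"
      using norm_expV_ray[OF r0, of j] s r0 unfolding z_def
      by (intro mult_mono power_mono) auto
    also have "\<dots> = (1+r)^p * exp ((2*NE)*(1+r)^(D-1) - gam*r^D)"
      by (simp add: mult.assoc exp_add[symmetric] algebra_simps)
    also have "\<dots> \<le> C * exp (-r)" using C r0 by blast
    finally show "norm (poly (QN p N) (z r) * exp (- poly Vc (z r))) \<le> C * exp (- r)" .
  next
    fix r :: real assume r: "r \<in> {0..}"
    have "(\<lambda>N. \<Sum>n<N. poly E (z r) ^ n /\<^sub>R fact n) \<longlonglongrightarrow> exp (poly E (z r))"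
      using exp_converges[of "poly E (z r)"] unfolding sums_def .
    then have lim: "(\<lambda>N. z r ^ p * ((\<Sum>n<N. poly E (z r) ^ n /\<^sub>R fact n) * exp (- poly Vc (z r))))
        \<longlonglongrightarrow> z r ^ p * (exp (poly E (z r)) * exp (- poly Vc (z r)))"
      by (intro tendsto_intros)
    have eq: "exp (poly E (z r)) * exp (- poly Vc (z r)) = exp (- complex_of_real gam * z r ^ D)"
      by (simp add: exp_add[symmetric] poly_Vc)
    show "(\<lambda>N. poly (QN p N) (z r) * exp (- poly Vc (z r))) \<longlonglongrightarrow> z r ^ p * exp (- complex_of_real gam * z r ^ D)"
      using lim unfolding poly_QN mult.assoc eq .
  qed
  then show ?thesis unfolding J_def z_def by (rule tendsto_mult_left)
qed

lemma indep:
  assumes h: "\<forall>Q. (\<Sum>k<D-1. c k * L (Suc k) Q) = 0"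
  shows "\<forall>k<D-1. c k = 0"
proof -
  define a where "a j = (if j = 0 then (\<Sum>k<D-1. c k) else - c (j - 1))" for j
  have D1: "{..<D} = {..<Suc (D - 1)}" using D_pos by simp
  have sumJ: "(\<Sum>j<D. a j * J j (\<lambda>z. poly Q z * exp (- poly Vc z))) = (\<Sum>k<D-1. c k * L (Suc k) Q)" for Q
  proof -
    have "(\<Sum>j<D. a j * J j (\<lambda>z. poly Q z * exp (- poly Vc z)))
        = a 0 * J 0 (\<lambda>z. poly Q z * exp (- poly Vc z)) + (\<Sum>k<D-1. a (Suc k) * J (Suc k) (\<lambda>z. poly Q z * exp (- poly Vc z)))"
      unfolding D1 by (rule sum.lessThan_Suc_shift)
    also have "\<dots> = (\<Sum>k<D-1. c k) * I 0 Q - (\<Sum>k<D-1. c k * (w ^ Suc k * I (Suc k) Q))"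
      unfolding a_def J_ray by (simp add: sum_negf)
    also have "\<dots> = (\<Sum>k<D-1. c k * L (Suc k) Q)"
      unfolding L_eq right_diff_distrib sum_subtractf sum_distrib_right by simp
    finally show ?thesis .
  qed
  have zero: "(\<Sum>j<D. a j * J j (\<lambda>z. poly Q z * exp (- poly Vc z))) = 0" for Q
    using sumJ h by simp
  have sp: "(\<Sum>j<D. a j * J j (\<lambda>z. z ^ p * exp (- complex_of_real gam * z ^ D))) = 0" for p
  proof -
    have "(\<lambda>N. \<Sum>j<D. a j * J j (\<lambda>z. poly (QN p N) z * exp (- poly Vc z)))
        \<longlonglongrightarrow> (\<Sum>j<D. a j * J j (\<lambda>z. z ^ p * exp (- complex_of_real gam * z ^ D)))"
      by (intro tendsto_sum tendsto_mult_left limit_step)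
    moreover have "(\<lambda>N. \<Sum>j<D. a j * J j (\<lambda>z. poly (QN p N) z * exp (- poly Vc z))) = (\<lambda>N. 0)"
      using zero by simp
    ultimately show ?thesis using LIMSEQ_unique tendsto_const by metis
  qed
  have "(\<Sum>j<D. a j * w ^ (j * (p + 1))) = 0" for p
  proof -
    have "(\<Sum>j<D. a j * w ^ (j * (p + 1))) * cp p = 0"
      using sp[of p] unfolding J_mono by (simp add: sum_distrib_right mult.assoc)
    then show ?thesis using cp_nonzero[of p] by simp
  qed
  then have al: "a l = 0" if "l < D" for l using dft that by blast
  show ?thesis
  proof (intro allI impI)
    fix k assume "k < D - 1"
    then have "Suc k < D" by simp
    from al[OF this] show "c k = 0" unfolding a_def by simp
  qed
qed

end

theorem mainTheorem2:
  fixes V :: "real poly" and Q :: "complex poly"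
  assumes "even (degree V)" and "degree V \<ge> 2" and "lead_coeff V > 0"
  shows "((\<exists>P :: complex poly. \<forall>x :: complex.
            poly Q x = exp (poly (map_poly complex_of_real V) x) *
              deriv (\<lambda>z. exp (- poly (map_poly complex_of_real V) z) * poly P z) x)
         \<longleftrightarrow> (\<forall>k \<in> {1..degree V - 1}.
              Gamma_integral (degree V) k
                (\<lambda>z. poly Q z * exp (- poly (map_poly complex_of_real V) z)) = 0))
       \<and> (\<forall>P1 P2 :: complex poly.
            (\<forall>x :: complex. poly Q x = exp (poly (map_poly complex_of_real V) x) *
               deriv (\<lambda>z. exp (- poly (map_poly complex_of_real V) z) * poly P1 z) x)
          \<and> (\<forall>x :: complex. poly Q x = exp (poly (map_poly complex_of_real V) x) *
               deriv (\<lambda>z. exp (- poly (map_poly complex_of_real V) z) * poly P2 z) x)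
          \<longrightarrow> P1 = P2)"
proof -
  interpret VS V using assms by unfold_locales auto
  have cond: "(\<forall>x. poly Q x = exp (poly (map_poly complex_of_real V) x) *
              deriv (\<lambda>z. exp (- poly (map_poly complex_of_real V) z) * poly P z) x) \<longleftrightarrow> Q = T P" for Q P
    using cond_iff[of Q P] unfolding Vc_def .
  have Leq: "Gamma_integral (degree V) k (\<lambda>z. poly Q z * exp (- poly (map_poly complex_of_real V) z)) = L k Q" for k Q
    unfolding L_def Vc_def ..
  have LR: "L k Q = L k R" if "Q = T P + R" for k Q P R
    using that by (simp add: L_add L_T)
  have rows: "\<forall>k<D-1. c k = 0" if c: "\<forall>i<D-1. (\<Sum>k<D-1. c k * L (Suc k) (monom 1 i)) = 0" for c
  proof (rule indep, intro allI)
    fix Q'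
    obtain P' R' where PR: "Q' = T P' + R'" "degree R' < D - 1" using T_divide by blast
    have "(\<Sum>k<D-1. c k * L (Suc k) Q') = (\<Sum>k<D-1. c k * (\<Sum>i<D-1. coeff R' i * L (Suc k) (monom 1 i)))"
      using LR[OF PR(1)] L_expand[OF PR(2)] by simp
    also have "\<dots> = (\<Sum>i<D-1. coeff R' i * (\<Sum>k<D-1. c k * L (Suc k) (monom 1 i)))"
      unfolding sum_distrib_left by (subst sum.swap) (auto intro!: sum.cong simp: mult_ac)
    also have "\<dots> = 0" using c by simp
    finally show "(\<Sum>k<D-1. c k * L (Suc k) Q') = 0" .
  qed
  have iff: "(\<exists>P. Q = T P) \<longleftrightarrow> (\<forall>k\<in>{1..D-1}. L k Q = 0)"
  proof
    assume "\<exists>P. Q = T P"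
    then show "\<forall>k\<in>{1..D-1}. L k Q = 0" using L_T by auto
  next
    assume h: "\<forall>k\<in>{1..D-1}. L k Q = 0"
    obtain P R where PR: "Q = T P + R" "degree R < D - 1" using T_divide by blast
    have LR0: "L k R = 0" if "k \<in> {1..D-1}" for k using h that LR[OF PR(1)] by simp
    have "\<forall>i<D-1. coeff R i = 0"
    proof (rule lin_alg[where F = "\<lambda>k i. L (Suc k) (monom 1 i)"])
      show "\<forall>k<D-1. c k = 0" if "\<forall>i<D-1. (\<Sum>k<D-1. c k * L (Suc k) (monom 1 i)) = 0" for c
        using rows that by blast
      show "\<forall>k<D-1. (\<Sum>i<D-1. L (Suc k) (monom 1 i) * coeff R i) = 0"
      proof (intro allI impI)
        fix k assume k: "k < D - 1"
        have "(\<Sum>i<D-1. L (Suc k) (monom 1 i) * coeff R i) = L (Suc k) R"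
          using L_expand[OF PR(2), of "Suc k"] by (simp add: mult.commute)
        also have "\<dots> = 0" using LR0 k by simp
        finally show "(\<Sum>i<D-1. L (Suc k) (monom 1 i) * coeff R i) = 0" .
      qed
    qed
    then have "R = 0"
      using PR(2) by (intro poly_eqI) (metis coeff_0 coeff_eq_0 leI le_less_trans)
    then show "\<exists>P. Q = T P" using PR(1) by auto
  qed
  show ?thesis
    unfolding Leq cond using iff T_inj by blast
qed

end
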